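(* A family of structures $\mathfrak{K}=\{\mathcal{A}_i:i\in\mathbb{N}\}$ is $\mathbf{Fin}$-learnable if and only if $\mathfrak{K}$ is a $\Sigma^{\mathrm{inf}}_1$-strong antichain, i.e., there are $\Sigma^{\mathrm{inf}}_1$ sentences $\{\varphi_i:i\in\mathbb{N}\}$ such that for all $i,j$: $\mathcal{A}_i\models\varphi_j \iff i=j$.
   Context: All structures are countable, have domain $\mathbb{N}$, are in a finite relational signature, and are identified with their atomic diagrams (elements of $2^{\mathbb{N}}$ via a fixed Gödel numbering). A family of structures $\mathfrak{K}$ is a countable set of pairwise nonisomorphic such structures. For a structure $\mathcal{S}$ and $s\in\mathbb{N}$, $\mathcal{S}\restriction_s$ denotes the finite substructure with domain $\{0,\dots,s\}$. The learning domain $\mathrm{LD}(\mathfrak{K})$ is the set of all structures with domain $\mathbb{N}$ isomorphic to some member of $\mathfrak{K}$. The hypothesis space is $\{\ulcorner\mathcal{A}\urcorner:\mathcal{A}\in\mathfrak{K}\}\cup\{?\}$, where the $\ulcorner\mathcal{A}\urcorner$ are pairwise distinct formal symbols. A learner is an arbitrary (not necessarily computable) function $\mathbf{M}$ from the finite structures $\{\mathcal{S}\restriction_s:\mathcal{S}\in\mathrm{LD}(\mathfrak{K}),s\in\mathbb{N}\}$ to the hypothesis space. $\mathfrak{K}$ is $\mathbf{Fin}$-learnable (learnable with no mind changes) if there is a learner $\mathbf{M}$ such that for every $\mathcal{S}\in\mathrm{LD}(\mathfrak{K})$ there is $s_0$ with $\mathbf{M}(\mathcal{S}\restriction_t)=?$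 for all $t<s_0$ and $\mathbf{M}(\mathcal{S}\restriction_t)=\ulcorner\mathcal{A}\urcorner$ for all $t\geq s_0$, where $\mathcal{A}\in\mathfrak{K}$ is isomorphic to $\mathcal{S}$. Infinitary logic $\mathcal{L}_{\omega_1\omega}$: $\Sigma^{\mathrm{inf}}_0=\Pi^{\mathrm{inf}}_0$ formulas are finitary quantifier-free formulas; a $\Sigma^{\mathrm{inf}}_\alpha$ formula is a countable disjunction $\bigvee_{i\in I}\exists\bar y_i\,\psi_i(\bar x,\bar y_i)$ with each $\psi_i$ a $\Pi^{\mathrm{inf}}_{\beta_i}$ formula, $\beta_i<\alpha$; a $\Pi^{\mathrm{inf}}_\alpha$ formula is a countable conjunction $\bigwedge_{i\in I}\forall\bar y_i\,\psi_i(\bar x,\bar y_i)$ with each $\psi_i$ a $\Sigma^{\mathrm{inf}}_{\beta_i}$ formula, $\beta_i<\alpha$ (all free variables among a fixed finite tuple $\bar x$). *)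

theory Defs
  imports "HOL-Library.Countable_Set"
begin

text \<open>Finite relational signature: list of arities (relation symbol k has arity sig!k).
A structure with domain nat is given by its relations: S k xs means R_k(xs) holds.
Well-formed structures are false outside the signature, so a structure is identified
with its atomic diagram.\<close>

type_synonym struc = "nat \<Rightarrow> nat list \<Rightarrow> bool"

definition wf_struc :: "nat list \<Rightarrow> struc \<Rightarrow> bool" where
  "wf_struc sig S \<longleftrightarrow> (\<forall>k xs. S k xs \<longrightarrow> k < length sig \<and> length xs = sig ! k)"

definition iso :: "nat list \<Rightarrow> struc \<Rightarrow> struc \<Rightarrow> bool" where
  "iso sig S T \<longleftrightarrow> (\<exists>f. bij f \<and>
     (\<forall>k < length sig. \<forall>xs. length xs = sig ! k \<longrightarrow> (S k xs \<longleftrightarrow> T k (map f xs))))"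

definition restr :: "nat \<Rightarrow> struc \<Rightarrow> nat \<times> struc" where
  "restr s S = (s, (\<lambda>k xs. S k xs \<and> (\<forall>x\<in>set xs. x \<le> s)))"

text \<open>Hypotheses: None = ?, Some i = the symbol for A_i.\<close>
definition Fin_learnable :: "nat list \<Rightarrow> (nat \<Rightarrow> struc) \<Rightarrow> bool" where
  "Fin_learnable sig A \<longleftrightarrow> (\<exists>M :: nat \<times> struc \<Rightarrow> nat option.
     \<forall>S. wf_struc sig S \<and> (\<exists>i. iso sig S (A i)) \<longrightarrow>
       (\<exists>i s0. iso sig S (A i) \<and> (\<forall>t<s0. M (restr t S) = None) \<and>
               (\<forall>t\<ge>s0. M (restr t S) = Some i)))"

datatype qf = Atom nat "nat list" | Eq nat nat | TT | Neg qf | Conj qf qf | Disj qf qf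

fun wf_qf :: "nat list \<Rightarrow> nat \<Rightarrow> qf \<Rightarrow> bool" where
  "wf_qf sig n (Atom k vs) \<longleftrightarrow> k < length sig \<and> length vs = sig ! k \<and> (\<forall>v\<in>set vs. v < n)"
| "wf_qf sig n (Eq a b) \<longleftrightarrow> a < n \<and> b < n"
| "wf_qf sig n TT \<longleftrightarrow> True"
| "wf_qf sig n (Neg p) \<longleftrightarrow> wf_qf sig n p"
| "wf_qf sig n (Conj p q) \<longleftrightarrow> wf_qf sig n p \<and> wf_qf sig n q"
| "wf_qf sig n (Disj p q) \<longleftrightarrow> wf_qf sig n p \<and> wf_qf sig n q"

fun eval_qf :: "struc \<Rightarrow> (nat \<Rightarrow> nat) \<Rightarrow> qf \<Rightarrow> bool" where
  "eval_qf S v (Atom k vs) \<longleftrightarrow> S k (map v vs)"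
| "eval_qf S v (Eq a b) \<longleftrightarrow> v a = v b"
| "eval_qf S v TT \<longleftrightarrow> True"
| "eval_qf S v (Neg p) \<longleftrightarrow> \<not> eval_qf S v p"
| "eval_qf S v (Conj p q) \<longleftrightarrow> eval_qf S v p \<and> eval_qf S v q"
| "eval_qf S v (Disj p q) \<longleftrightarrow> eval_qf S v p \<or> eval_qf S v q"

text \<open>A Sigma^inf_1 sentence: a countable disjunction of formulas \<exists>y_0..y_{n-1}. psi,
psi quantifier-free with free variables among y_0..y_{n-1}; represented by the
countable set of pairs (n, psi).\<close>
definition sigma1_sentence :: "nat list \<Rightarrow> (nat \<times> qf) set \<Rightarrow> bool" where
  "sigma1_sentence sig \<Phi> \<longleftrightarrow> countable \<Phi> \<and> (\<forall>(n, \<psi>)\<in>\<Phi>. wf_qf sig n \<psi>)"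

definition models_sigma1 :: "struc \<Rightarrow> (nat \<times> qf) set \<Rightarrow> bool" where
  "models_sigma1 S \<Phi> \<longleftrightarrow> (\<exists>(n, \<psi>)\<in>\<Phi>. \<exists>v. eval_qf S v \<psi>)"

definition sigma1_strong_antichain :: "nat list \<Rightarrow> (nat \<Rightarrow> struc) \<Rightarrow> bool" where
  "sigma1_strong_antichain sig A \<longleftrightarrow> (\<exists>\<phi> :: nat \<Rightarrow> (nat \<times> qf) set.
     (\<forall>j. sigma1_sentence sig (\<phi> j)) \<and> (\<forall>i j. models_sigma1 (A i) (\<phi> j) \<longleftrightarrow> i = j))"

end

theory Submission
  imports Defs
begin

instance qf :: countable by countable_datatype

lemma eval_restr:
  assumes "wf_qf sig n \<psi>" "\<forall>y<n. v y \<le> t"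
  shows "eval_qf (\<lambda>k xs. S k xs \<and> (\<forall>x\<in>set xs. x \<le> t)) v \<psi> = eval_qf S v \<psi>"
  using assms by (induction \<psi>) auto

lemma eval_iso:
  assumes "bij f" "\<forall>k < length sig. \<forall>xs. length xs = sig ! k \<longrightarrow> (S k xs \<longleftrightarrow> T k (map f xs))"
    "wf_qf sig n \<psi>"
  shows "eval_qf S v \<psi> = eval_qf T (f \<circ> v) \<psi>"
  using assms(3)
proof (induction \<psi>)
  case (Eq a b) thus ?case using assms(1) by (auto simp: bij_def inj_eq)
qed (use assms in auto)

lemma models_iso:
  assumes "iso sig S T" "sigma1_sentence sig \<Phi>"
  shows "models_sigma1 S \<Phi> = models_sigma1 T \<Phi>"
proof -
  obtain f where f: "bij f" "\<forall>k < length sig. \<forall>xs. length xs = sig ! k \<longrightarrow> (S k xs \<longleftrightarrow> T k (map f xs))"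
    using assms(1) unfolding iso_def by blast
  have wf: "\<And>n \<psi>. (n,\<psi>) \<in> \<Phi> \<Longrightarrow> wf_qf sig n \<psi>" using assms(2) unfolding sigma1_sentence_def by blast
  show ?thesis unfolding models_sigma1_def
  proof
    assume "\<exists>(n, \<psi>)\<in>\<Phi>. \<exists>v. eval_qf S v \<psi>"
    then obtain n \<psi> v where "(n,\<psi>)\<in>\<Phi>" "eval_qf S v \<psi>" by blast
    thus "\<exists>(n, \<psi>)\<in>\<Phi>. \<exists>v. eval_qf T v \<psi>" using eval_iso[OF f wf] by blast
  next
    assume "\<exists>(n, \<psi>)\<in>\<Phi>. \<exists>v. eval_qf T v \<psi>"
    then obtain n \<psi> v where h: "(n,\<psi>)\<in>\<Phi>" "eval_qf T v \<psi>" by blast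
    have "f \<circ> (inv f \<circ> v) = v" using f(1) by (auto simp: bij_def surj_f_inv_f)
    hence "eval_qf S (inv f \<circ> v) \<psi>" using eval_iso[OF f wf[OF h(1)], of "inv f \<circ> v"] h(2) by simp
    thus "\<exists>(n, \<psi>)\<in>\<Phi>. \<exists>v. eval_qf S v \<psi>" using h(1) by blast
  qed
qed

lemma iso_sym: assumes "iso sig S T" shows "iso sig T S"
proof -
  obtain f where f: "bij f" "\<forall>k < length sig. \<forall>xs. length xs = sig ! k \<longrightarrow> (S k xs \<longleftrightarrow> T k (map f xs))"
    using assms(1) unfolding iso_def by blast
  have "bij (inv f)" using f(1) by (simp add: bij_imp_bij_inv)
  moreover have "\<forall>k < length sig. \<forall>ys::nat list. length ys = sig ! k \<longrightarrow> (T k ys \<longleftrightarrow> S k (map (inv f) ys))"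
  proof (intro allI impI)
    fix k and ys :: "nat list" assume "k < length sig" "length ys = sig ! k"
    moreover have "map f (map (inv f) ys) = ys" using f(1) by (simp add: bij_def surj_f_inv_f map_idI)
    ultimately show "T k ys \<longleftrightarrow> S k (map (inv f) ys)" using f(2) by (metis length_map)
  qed
  ultimately show ?thesis unfolding iso_def by blast
qed

lemma iso_trans: assumes "iso sig S T" "iso sig T U" shows "iso sig S U"
proof -
  obtain f where f: "bij f" "\<forall>k < length sig. \<forall>xs. length xs = sig ! k \<longrightarrow> (S k xs \<longleftrightarrow> T k (map f xs))"
    using assms(1) unfolding iso_def by blast
  obtain g where g: "bij g" "\<forall>k < length sig. \<forall>xs. length xs = sig ! k \<longrightarrow> (T k xs \<longleftrightarrow> U k (map g xs))"
    using assms(2) unfolding iso_def by blast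
  have "bij (g \<circ> f)" using f g by (simp add: bij_comp)
  moreover have "\<forall>k < length sig. \<forall>xs. length xs = sig ! k \<longrightarrow> (S k xs \<longleftrightarrow> U k (map (g \<circ> f) xs))"
    using f(2) g(2) by simp
  ultimately show ?thesis unfolding iso_def by blast
qed

lemma extend_bij:
  fixes v :: "nat \<Rightarrow> nat"
  assumes "inj_on v {..t}"
  shows "\<exists>g. bij g \<and> (\<forall>x\<le>t. g x = v x)"
proof -
  let ?B = "v ` {..t}"
  let ?h = "enumerate (UNIV - ?B)"
  have inf: "infinite (UNIV - ?B)" by (simp add: Diff_infinite_finite)
  have hb: "bij_betw ?h UNIV (UNIV - ?B)" using bij_enumerate[OF inf] .
  define g where "g x = (if x \<le> t then v x else ?h (x - Suc t))" for x
  have "inj g"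
  proof (rule injI)
    fix x y assume e: "g x = g y"
    show "x = y"
    proof (cases "x \<le> t"; cases "y \<le> t")
      assume "x \<le> t" "y \<le> t" thus ?thesis using e assms by (auto simp: g_def inj_on_def)
    next
      assume "x \<le> t" "\<not> y \<le> t" thus ?thesis using e hb
        by (auto simp: g_def bij_betw_def)
    next
      assume "\<not> x \<le> t" "y \<le> t" thus ?thesis using e hb
        by (auto simp: g_def bij_betw_def)
    next
      assume a: "\<not> x \<le> t" "\<not> y \<le> t"
      hence "x - Suc t = y - Suc t" using e hb by (auto simp: g_def bij_betw_def inj_on_def)
      thus ?thesis using a by simp
    qed
  qed
  moreover have "surj g"
  proof -
    { fix y
      have "y \<in> range g"
      proof (cases "y \<in> ?B")
        case True then obtain x where "x \<le> t" "y = v x" by auto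
        thus ?thesis by (metis g_def rangeI)
      next
        case False hence "y \<in> range ?h" using hb unfolding bij_betw_def by auto
        then obtain m where "y = ?h m" by auto
        hence "g (m + Suc t) = y" by (simp add: g_def)
        thus ?thesis by (metis rangeI)
      qed }
    thus ?thesis by auto
  qed
  ultimately show ?thesis by (auto simp: bij_def g_def)
qed

lemma eval_foldr: "eval_qf S v (foldr Conj xs TT) \<longleftrightarrow> (\<forall>p\<in>set xs. eval_qf S v p)"
  by (induction xs) auto

lemma wf_foldr: "wf_qf sig n (foldr Conj xs TT) \<longleftrightarrow> (\<forall>p\<in>set xs. wf_qf sig n p)"
  by (induction xs) auto

definition diag :: "nat list \<Rightarrow> nat \<Rightarrow> struc \<Rightarrow> qf" where
"diag sig n S = foldr Conj ([Neg (Eq a b). a <- [0..<n], b <- [0..<n], a \<noteq> b] @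
   concat (map (\<lambda>k. map (\<lambda>xs. if S k xs then Atom k xs else Neg (Atom k xs))
     (List.n_lists (sig!k) [0..<n])) [0..<length sig])) TT"

lemma wf_diag: "wf_qf sig n (diag sig n S)"
  unfolding diag_def wf_foldr by (auto simp: set_n_lists subset_iff)

lemma eval_diag_D:
  assumes "eval_qf T v (diag sig n S)"
  shows "inj_on v {..<n}"
    "\<And>k xs. k<length sig \<Longrightarrow> length xs = sig!k \<Longrightarrow> set xs \<subseteq> {..<n} \<Longrightarrow> (T k (map v xs) \<longleftrightarrow> S k xs)"
proof -
  have all: "\<And>p. p \<in> set ([Neg (Eq a b). a <- [0..<n], b <- [0..<n], a \<noteq> b] @
   concat (map (\<lambda>k. map (\<lambda>xs. if S k xs then Atom k xs else Neg (Atom k xs))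
     (List.n_lists (sig!k) [0..<n])) [0..<length sig])) \<Longrightarrow> eval_qf T v p"
    using assms unfolding diag_def eval_foldr by blast
  show "inj_on v {..<n}"
  proof (rule inj_onI)
    fix a b assume "a \<in> {..<n}" "b \<in> {..<n}" "v a = v b"
    thus "a = b" using all[of "Neg (Eq a b)"] by (cases "a = b") auto
  qed
  fix k xs assume h: "k<length sig" "length xs = sig!k" "set xs \<subseteq> {..<n}"
  have m: "xs \<in> set (List.n_lists (sig!k) [0..<n])" using h by (auto simp: set_n_lists)
  show "T k (map v xs) \<longleftrightarrow> S k xs"
  proof (cases "S k xs")
    case True
    thus ?thesis using all[of "Atom k xs"] h m by force
  next
    case False
    thus ?thesis using all[of "Neg (Atom k xs)"] h m by force
  qed
qed

lemma diag_self: "eval_qf S id (diag sig n S)"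
  unfolding diag_def eval_foldr by (auto simp: set_n_lists)

theorem mainTheorem2:
  fixes sig :: "nat list" and A :: "nat \<Rightarrow> struc"
  assumes "\<forall>i. wf_struc sig (A i)"
    and "\<forall>i j. i \<noteq> j \<longrightarrow> \<not> iso sig (A i) (A j)"
  shows "Fin_learnable sig A \<longleftrightarrow> sigma1_strong_antichain sig A"

proof
  assume "Fin_learnable sig A"
  then obtain M :: "nat \<times> struc \<Rightarrow> nat option" where M: "\<And>S. wf_struc sig S \<Longrightarrow> (\<exists>i. iso sig S (A i)) \<Longrightarrow>
       (\<exists>i s0. iso sig S (A i) \<and> (\<forall>t<s0. M (restr t S) = None) \<and>
               (\<forall>t\<ge>s0. M (restr t S) = Some i))"
    unfolding Fin_learnable_def by blast
  have isoA: "\<And>i. iso sig (A i) (A i)"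
    unfolding iso_def by (intro exI[of _ id]) auto
  define \<phi> where "\<phi> i = {(Suc t, diag sig (Suc t) S) | t S. wf_struc sig S \<and> M (restr t S) = Some i}" for i
  have sent: "sigma1_sentence sig (\<phi> j)" for j
    unfolding sigma1_sentence_def \<phi>_def using wf_diag by (auto intro: countableI_type)
  have mod: "models_sigma1 (A i) (\<phi> j) \<longleftrightarrow> i = j" for i j
  proof
    assume "models_sigma1 (A i) (\<phi> j)"
    then obtain t S v where S: "wf_struc sig S" "M (restr t S) = Some j"
      and ev: "eval_qf (A i) v (diag sig (Suc t) S)"
      unfolding models_sigma1_def \<phi>_def by blast
    have "inj_on v {..t}" using eval_diag_D(1)[OF ev] lessThan_Suc_atMost by simp
    then obtain g where g: "bij g" "\<forall>x\<le>t. g x = v x" using extend_bij by blast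
    define S' where "S' k xs = A i k (map g xs)" for k xs
    have wfA: "wf_struc sig (A i)" using assms(1) by blast
    have wfS': "wf_struc sig S'" using wfA unfolding wf_struc_def S'_def by (metis length_map)
    have isoS': "iso sig S' (A i)" unfolding iso_def S'_def using g(1) by blast
    have "restr t S' = restr t S"
      unfolding restr_def
    proof (intro arg_cong[where f="Pair t"] ext)
      fix k xs
      show "(S' k xs \<and> (\<forall>x\<in>set xs. x \<le> t)) = (S k xs \<and> (\<forall>x\<in>set xs. x \<le> t))"
      proof (cases "(\<forall>x\<in>set xs. x \<le> t)")
        case True
        hence mg: "map g xs = map v xs" using g(2) by simp
        show ?thesis
        proof (cases "k < length sig \<and> length xs = sig ! k")
          case True2: True
          have "set xs \<subseteq> {..<Suc t}" using True by auto
          hence "A i k (map v xs) = S k xs" using eval_diag_D(2)[OF ev] True2 by blast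
          thus ?thesis unfolding S'_def mg using True by simp
        next
          case False
          thus ?thesis using wfA S(1) unfolding wf_struc_def S'_def by (metis length_map)
        qed
      next
        case False
        hence n: "\<not> (\<forall>x\<in>set xs. x \<le> t)" by blast
        show ?thesis using n by blast
      qed
    qed
    obtain i' s0 where L: "iso sig S' (A i')" "\<forall>t<s0. M (restr t S') = None"
      "\<forall>t\<ge>s0. M (restr t S') = Some i'"
      using M[OF wfS'] isoS' by blast
    have "M (restr t S') = Some j" using S(2) \<open>restr t S' = restr t S\<close> by simp
    hence "\<not> t < s0" using L(2) by force
    hence "j = i'" using L(3) \<open>M (restr t S') = Some j\<close> by auto
    hence "iso sig (A i) (A j)" using iso_trans[OF iso_sym[OF isoS'] L(1)] by simp
    thus "i = j" using assms(2) by blast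
  next
    assume "i = j"
    obtain i' s0 where L: "iso sig (A i) (A i')" "\<forall>t\<ge>s0. M (restr t (A i)) = Some i'"
      using M[OF spec[OF assms(1), of i]] isoA[of i] by blast
    have "i' = i" using L(1) assms(2) by metis
    hence "(Suc s0, diag sig (Suc s0) (A i)) \<in> \<phi> j"
      unfolding \<phi>_def using L(2) assms(1) \<open>i = j\<close> by blast
    thus "models_sigma1 (A i) (\<phi> j)" unfolding models_sigma1_def using diag_self by blast
  qed
  show "sigma1_strong_antichain sig A"
    unfolding sigma1_strong_antichain_def using sent mod by blast
next
  assume "sigma1_strong_antichain sig A"
  then obtain \<phi> where sent: "\<And>j. sigma1_sentence sig (\<phi> j)"
    and mod: "\<And>i j. models_sigma1 (A i) (\<phi> j) \<longleftrightarrow> i = j"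
    unfolding sigma1_strong_antichain_def by blast
  have wfphi: "\<And>j n \<psi>. (n,\<psi>) \<in> \<phi> j \<Longrightarrow> wf_qf sig n \<psi>"
    using sent unfolding sigma1_sentence_def by blast
  define C where "C t S i \<longleftrightarrow> (\<exists>(n,\<psi>)\<in>\<phi> i. \<exists>v. (\<forall>y<n. v y \<le> t) \<and> eval_qf S v \<psi>)" for t S i
  define M where "M p = (if \<exists>i. C (fst p) (snd p) i then Some (SOME i. C (fst p) (snd p) i) else None)"
    for p :: "nat \<times> struc"
  have Cr: "C t (snd (restr t S)) i \<longleftrightarrow> C t S i" for t S i
  proof -
    have e: "\<And>n \<psi> v. (n,\<psi>) \<in> \<phi> i \<Longrightarrow> (\<forall>y<n. v y \<le> t) \<Longrightarrow>
       eval_qf (snd (restr t S)) v \<psi> = eval_qf S v \<psi>"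
      unfolding restr_def snd_conv using eval_restr[OF wfphi] by blast
    show ?thesis unfolding C_def
    proof
      assume "\<exists>(n,\<psi>)\<in>\<phi> i. \<exists>v. (\<forall>y<n. v y \<le> t) \<and> eval_qf (snd (restr t S)) v \<psi>"
      then obtain n \<psi> v where h: "(n,\<psi>)\<in>\<phi> i" "\<forall>y<n. v y \<le> t" "eval_qf (snd (restr t S)) v \<psi>"
        by blast
      hence "eval_qf S v \<psi>" using e by blast
      thus "\<exists>(n,\<psi>)\<in>\<phi> i. \<exists>v. (\<forall>y<n. v y \<le> t) \<and> eval_qf S v \<psi>" using h by blast
    next
      assume "\<exists>(n,\<psi>)\<in>\<phi> i. \<exists>v. (\<forall>y<n. v y \<le> t) \<and> eval_qf S v \<psi>"
      then obtain n \<psi> v where h: "(n,\<psi>)\<in>\<phi> i" "\<forall>y<n. v y \<le> t" "eval_qf S v \<psi>"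
        by blast
      hence "eval_qf (snd (restr t S)) v \<psi>" using e by blast
      thus "\<exists>(n,\<psi>)\<in>\<phi> i. \<exists>v. (\<forall>y<n. v y \<le> t) \<and> eval_qf (snd (restr t S)) v \<psi>" using h by blast
    qed
  qed
  have Mr: "M (restr t S) = (if \<exists>i. C t S i then Some (SOME i. C t S i) else None)" for t S
  proof -
    have e: "C t (snd (restr t S)) = C t S" using Cr by (intro ext)
    have f: "fst (restr t S) = t" by (simp add: restr_def)
    show ?thesis unfolding M_def f e by (rule refl)
  qed
  have Cmono: "C t S i \<Longrightarrow> t \<le> t' \<Longrightarrow> C t' S i" for t t' S i
  proof -
    assume a: "C t S i" "t \<le> t'"
    then obtain n \<psi> v where h: "(n,\<psi>)\<in>\<phi> i" "\<forall>y<n. v y \<le> t" "eval_qf S v \<psi>"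
      unfolding C_def by blast
    have "\<forall>y<n. v y \<le> t'" using h(2) a(2) by auto
    thus "C t' S i" unfolding C_def using h by blast
  qed
  have Cmod: "C t S i \<Longrightarrow> models_sigma1 S (\<phi> i)" for t S i
    unfolding C_def models_sigma1_def by blast
  show "Fin_learnable sig A"
    unfolding Fin_learnable_def
  proof (intro exI[of _ M] allI impI)
    fix S assume "wf_struc sig S \<and> (\<exists>i. iso sig S (A i))"
    then obtain i0 where iso0: "iso sig S (A i0)" by blast
    have uniq: "i = i0" if "C t S i" for t i
      using Cmod[OF that] models_iso[OF iso0 sent, of i] mod[of i0 i] by simp
    have "models_sigma1 S (\<phi> i0)" using mod[of i0 i0] models_iso[OF iso0 sent, of i0] by simp
    then obtain n \<psi> v where nv: "(n,\<psi>) \<in> \<phi> i0" "eval_qf S v \<psi>"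
      unfolding models_sigma1_def by blast
    have "C (\<Sum>y<n. v y) S i0" unfolding C_def
      using nv by (intro bexI[OF _ nv(1)]) (auto intro!: exI[of _ v] member_le_sum)
    hence ex: "\<exists>t. \<exists>i. C t S i" by blast
    define s0 where "s0 = (LEAST t. \<exists>i. C t S i)"
    have "\<exists>i. C s0 S i" unfolding s0_def using LeastI_ex[OF ex] .
    hence "C s0 S i0" using uniq by blast
    have "\<forall>t<s0. M (restr t S) = None"
      using not_less_Least Mr unfolding s0_def by auto
    moreover have "\<forall>t\<ge>s0. M (restr t S) = Some i0"
    proof (intro allI impI)
      fix t assume "s0 \<le> t"
      hence c: "C t S i0" using Cmono \<open>C s0 S i0\<close> by blast
      hence "C t S (SOME i. C t S i)" by (rule someI)
      hence "(SOME i. C t S i) = i0" using uniq by blast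
      thus "M (restr t S) = Some i0" using Mr c by auto
    qed
    ultimately show "\<exists>i s0. iso sig S (A i) \<and> (\<forall>t<s0. M (restr t S) = None) \<and>
               (\<forall>t\<ge>s0. M (restr t S) = Some i)" using iso0 by blast
  qed
qed

end
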